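(* Let $f\in\mathcal{F}_k$. Then the set $\mathcal{V}=\{-1,0,1\}^k$ is representative for the Lovász hinge $L^f$, i.e., for every $p\in\Delta_\mathcal{Y}$, $\arg\min_{u\in\mathbb{R}^k}\sum_{y\in\mathcal{Y}}p_yL^f(u,y)\cap\mathcal{V}\neq\emptyset$.
   Context: $[k]=\{1,\dots,k\}$, $\mathcal{Y}=\{-1,1\}^k$, $\Delta_\mathcal{Y}$ the probability distributions on $\mathcal{Y}$. $u\odot u'$ entrywise product, $\mathbbm{1}$ all-ones vector, $(x)_+$ entrywise positive part. $\mathcal{F}_k$: set functions $f:2^{[k]}\to\mathbb{R}$ that are submodular ($f(S)+f(T)\ge f(S\cup T)+f(S\cap T)$), increasing ($f(S\cup T)\ge f(S)$ for disjoint $S,T$) and normalized ($f(\emptyset)=0$). Lovász extension $F(x)=\max_\pi\sum_{i=1}^k x_{\pi_i}(f(\{\pi_1,\dots,\pi_i\})-f(\{\pi_1,\dots,\pi_{i-1}\}))$ for $x\in\mathbb{R}^k_+$ (max over permutations of $[k]$); Lovász hinge $L^f(u,y)=F((\mathbbm{1}-u\odot y)_+)$. *)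

theory Defs
  imports "HOL-Analysis.Analysis" "HOL-Combinatorics.Permutations"
begin

text \<open>Ground set [k] = {1..k}; vectors in R^k are functions nat => real (only
  coordinates in {1..k} matter). Set functions are f :: nat set => real.\<close>

definition submodular_on :: "nat \<Rightarrow> (nat set \<Rightarrow> real) \<Rightarrow> bool" where
  "submodular_on k f \<longleftrightarrow> (\<forall>S T. S \<subseteq> {1..k} \<longrightarrow> T \<subseteq> {1..k} \<longrightarrow>
      f S + f T \<ge> f (S \<union> T) + f (S \<inter> T))"

definition increasing_on :: "nat \<Rightarrow> (nat set \<Rightarrow> real) \<Rightarrow> bool" where
  "increasing_on k f \<longleftrightarrow> (\<forall>S T. S \<subseteq> {1..k} \<longrightarrow> T \<subseteq> {1..k} \<longrightarrow> S \<inter> T = {} \<longrightarrow>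
      f (S \<union> T) \<ge> f S)"

definition normalized :: "(nat set \<Rightarrow> real) \<Rightarrow> bool" where
  "normalized f \<longleftrightarrow> f {} = 0"

definition F_class :: "nat \<Rightarrow> (nat set \<Rightarrow> real) set" where
  "F_class k = {f. submodular_on k f \<and> increasing_on k f \<and> normalized f}"

definition lovasz_ext :: "nat \<Rightarrow> (nat set \<Rightarrow> real) \<Rightarrow> (nat \<Rightarrow> real) \<Rightarrow> real" where
  "lovasz_ext k f x = Max ((\<lambda>\<pi>. \<Sum>i=1..k. x (\<pi> i) * (f (\<pi> ` {1..i}) - f (\<pi> ` {1..<i})))
      ` {\<pi>. \<pi> permutes {1..k}})"

definition lovasz_hinge :: "nat \<Rightarrow> (nat set \<Rightarrow> real) \<Rightarrow> (nat \<Rightarrow> real) \<Rightarrow> (nat \<Rightarrow> real) \<Rightarrow> real" where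
  "lovasz_hinge k f u y = lovasz_ext k f (\<lambda>i. max 0 (1 - u i * y i))"

definition labels :: "nat \<Rightarrow> (nat \<Rightarrow> real) set" where
  "labels k = PiE {1..k} (\<lambda>_. {-1, 1})"

definition simplex_labels :: "nat \<Rightarrow> ((nat \<Rightarrow> real) \<Rightarrow> real) set" where
  "simplex_labels k = {p. (\<forall>y\<in>labels k. p y \<ge> 0) \<and> (\<Sum>y\<in>labels k. p y) = 1}"

definition exp_loss :: "nat \<Rightarrow> (nat set \<Rightarrow> real) \<Rightarrow> ((nat \<Rightarrow> real) \<Rightarrow> real) \<Rightarrow> (nat \<Rightarrow> real) \<Rightarrow> real" where
  "exp_loss k f p u = (\<Sum>y\<in>labels k. p y * lovasz_hinge k f u y)"

definition V_set :: "nat \<Rightarrow> (nat \<Rightarrow> real) set" where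
  "V_set k = PiE {1..k} (\<lambda>_. {-1, 0, 1})"

end

theory Submission
  imports Defs
begin


definition LS :: "nat \<Rightarrow> (nat set \<Rightarrow> real) \<Rightarrow> (nat \<Rightarrow> nat) \<Rightarrow> (nat \<Rightarrow> real) \<Rightarrow> real" where
  "LS k f \<sigma> x = (\<Sum>i=1..k. x (\<sigma> i) * (f (\<sigma> ` {1..i}) - f (\<sigma> ` {1..<i})))"

definition gv :: "(nat set \<Rightarrow> real) \<Rightarrow> (nat \<Rightarrow> nat) \<Rightarrow> nat \<Rightarrow> real" where
  "gv f \<sigma> j = f (\<sigma> ` {1..inv \<sigma> j}) - f (\<sigma> ` {1..<inv \<sigma> j})"

lemma ext_LS: "lovasz_ext k f x = Max ((\<lambda>\<sigma>. LS k f \<sigma> x) ` {\<sigma>. \<sigma> permutes {1..k}})"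
  by (simp add: lovasz_ext_def LS_def)

lemma LS_le_ext: "\<sigma> permutes {1..k} \<Longrightarrow> LS k f \<sigma> x \<le> lovasz_ext k f x"
  unfolding ext_LS by (rule Max_ge) (auto simp: finite_permutations)

lemma ext_attained: "\<exists>\<sigma>. \<sigma> permutes {1..k} \<and> lovasz_ext k f x = LS k f \<sigma> x"
proof -
  have "lovasz_ext k f x \<in> (\<lambda>\<sigma>. LS k f \<sigma> x) ` {\<sigma>. \<sigma> permutes {1..k}}"
    unfolding ext_LS by (rule Max_in) (use permutes_id finite_permutations in blast)+
  then show ?thesis by auto
qed

lemma LS_as_sum:
  assumes "\<sigma> permutes {1..k}"
  shows "LS k f \<sigma> x = (\<Sum>j\<in>{1..k}. x j * gv f \<sigma> j)"
proof -
  have "(\<Sum>j\<in>{1..k}. x j * gv f \<sigma> j) = (\<Sum>i\<in>{1..k}. x (\<sigma> i) * gv f \<sigma> (\<sigma> i))"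
    using sum.reindex_bij_betw[OF permutes_imp_bij[OF assms], of "\<lambda>j. x j * gv f \<sigma> j"] by simp
  also have "\<dots> = LS k f \<sigma> x"
    unfolding LS_def gv_def using permutes_inverses(2)[OF assms] by simp
  finally show ?thesis by simp
qed

lemma tele:
  fixes n :: nat and f :: "nat set \<Rightarrow> real" and \<sigma> :: "nat \<Rightarrow> nat" shows "(\<Sum>i=1..n. (f (\<sigma> ` {1..i}) - f (\<sigma> ` {1..<i}))) = f (\<sigma> ` {1..n}) - f {}"
proof (induction n)
  case 0 then show ?case by simp
next
  case (Suc n)
  have "{1..<Suc n} = {1..n}" by auto
  then show ?case using Suc by (simp add: sum.cl_ivl_Suc)
qed

lemma gv_total:
  assumes "\<sigma> permutes {1..k}" "f {} = 0"
  shows "sum (gv f \<sigma>) {1..k} = f {1..k}"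
proof -
  have "sum (gv f \<sigma>) {1..k} = LS k f \<sigma> (\<lambda>_. 1)" using LS_as_sum[OF assms(1)] by simp
  also have "\<dots> = f (\<sigma> ` {1..k})" unfolding LS_def using tele[of f \<sigma> k] assms(2) by simp
  finally show ?thesis using permutes_image[OF assms(1)] by simp
qed

lemma gv_sub:
  assumes sm: "submodular_on k f" and nz: "f {} = 0" and p: "\<sigma> permutes {1..k}"
  shows "m \<le> k \<Longrightarrow> S \<subseteq> \<sigma> ` {1..m} \<Longrightarrow> sum (gv f \<sigma>) S \<le> f S"
proof (induction m arbitrary: S)
  case 0 then show ?case using nz by simp
next
  case (Suc m S)
  have img: "\<sigma> ` {1..Suc m} = insert (\<sigma> (Suc m)) (\<sigma> ` {1..m})" by (auto simp: atLeastAtMostSuc_conv)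
  show ?case
  proof (cases "\<sigma> (Suc m) \<in> S")
    case False
    then have "S \<subseteq> \<sigma> ` {1..m}" using Suc.prems img by auto
    then show ?thesis using Suc by simp
  next
    case True
    define A where "A = S - {\<sigma> (Suc m)}"
    have A: "A \<subseteq> \<sigma> ` {1..m}" using Suc.prems img A_def by auto
    have fin: "finite A" using A finite_subset by blast
    have nin: "\<sigma> (Suc m) \<notin> \<sigma> ` {1..m}"
      using permutes_inj[OF p] by (auto simp: inj_def) (metis Suc_n_not_le_n)
    have S: "S = insert (\<sigma> (Suc m)) A" using True A_def by auto
    have nA: "\<sigma> (Suc m) \<notin> A" by (simp add: A_def)
    have "sum (gv f \<sigma>) S = gv f \<sigma> (\<sigma> (Suc m)) + sum (gv f \<sigma>) A"
      using sum.insert[OF fin nA, of "gv f \<sigma>"] S by simp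
    also have "gv f \<sigma> (\<sigma> (Suc m)) = f (\<sigma> ` {1..Suc m}) - f (\<sigma> ` {1..m})"
      unfolding gv_def using permutes_inverses(2)[OF p] atLeastLessThanSuc_atLeastAtMost by simp
    also have "sum (gv f \<sigma>) A \<le> f A" using Suc.IH[OF _ A] Suc.prems by simp
    also have "f (\<sigma> ` {1..Suc m}) - f (\<sigma> ` {1..m}) + f A \<le> f S"
    proof -
      have "\<sigma> ` {1..Suc m} \<subseteq> \<sigma> ` {1..k}" using Suc.prems by (intro image_mono) auto
      then have s1: "S \<subseteq> {1..k}" using Suc.prems permutes_image[OF p] by auto
      have s2: "\<sigma> ` {1..m} \<subseteq> {1..k}" using Suc.prems permutes_image[OF p] by auto
      have "f S + f (\<sigma> ` {1..m}) \<ge> f (S \<union> \<sigma> ` {1..m}) + f (S \<inter> \<sigma> ` {1..m})"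
        using sm s1 s2 unfolding submodular_on_def by blast
      moreover have "S \<union> \<sigma> ` {1..m} = \<sigma> ` {1..Suc m}" using S A img by auto
      moreover have "S \<inter> \<sigma> ` {1..m} = A" using S A nin by auto
      ultimately show ?thesis by simp
    qed
    finally show ?thesis by simp
  qed
qed

lemma greedy_core:
  assumes p: "\<pi> permutes {1..k}" and nz: "f {} = 0"
    and srt: "\<And>i j. 1 \<le> i \<Longrightarrow> i \<le> j \<Longrightarrow> j \<le> k \<Longrightarrow> x (\<pi> j) \<le> x (\<pi> i)"
    and gS: "\<And>S. S \<subseteq> {1..k} \<Longrightarrow> sum g S \<le> f S"
    and gT: "sum g {1..k} = f {1..k}"
  shows "(\<Sum>i=1..k. x (\<pi> i) * g (\<pi> i)) \<le> LS k f \<pi> x"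
proof -
  define h where "h i = f (\<pi> ` {1..i}) - f (\<pi> ` {1..<i})" for i
  define D where "D n = f (\<pi> ` {1..n}) - sum g (\<pi> ` {1..n})" for n
  have D0: "D n \<ge> 0" if "n \<le> k" for n
    using gS[of "\<pi> ` {1..n}"] permutes_image[OF p] that unfolding D_def by fastforce
  have claim: "n \<le> k \<Longrightarrow> (\<Sum>i=1..n. x (\<pi> i) * (h i - g (\<pi> i))) \<ge> x (\<pi> n) * D n" for n
  proof (induction n)
    case 0 then show ?case by (simp add: D_def nz)
  next
    case (Suc n)
    have img: "\<pi> ` {1..Suc n} = insert (\<pi> (Suc n)) (\<pi> ` {1..n})" by (auto simp: atLeastAtMostSuc_conv)
    have nin: "\<pi> (Suc n) \<notin> \<pi> ` {1..n}"
      using permutes_inj[OF p] by (auto simp: inj_def) (metis Suc_n_not_le_n)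
    have DS: "D (Suc n) = D n + (h (Suc n) - g (\<pi> (Suc n)))"
      unfolding D_def h_def using img nin atLeastLessThanSuc_atLeastAtMost by simp
    have step: "x (\<pi> n) * D n \<ge> x (\<pi> (Suc n)) * D n"
    proof (cases "n = 0")
      case True then show ?thesis by (simp add: D_def nz)
    next
      case False
      then show ?thesis using srt[of n "Suc n"] Suc.prems D0[of n]
        by (intro mult_right_mono) auto
    qed
    have "x (\<pi> (Suc n)) * D (Suc n) = x (\<pi> (Suc n)) * D n + x (\<pi> (Suc n)) * (h (Suc n) - g (\<pi> (Suc n)))"
      unfolding DS by (simp add: algebra_simps)
    also have "\<dots> \<le> (\<Sum>i=1..n. x (\<pi> i) * (h i - g (\<pi> i))) + x (\<pi> (Suc n)) * (h (Suc n) - g (\<pi> (Suc n)))"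
      using Suc step by simp
    also have "\<dots> = (\<Sum>i=1..Suc n. x (\<pi> i) * (h i - g (\<pi> i)))"
      by (simp add: sum.cl_ivl_Suc)
    finally show ?case .
  qed
  have "D k = 0" unfolding D_def using permutes_image[OF p] gT by simp
  then have "(\<Sum>i=1..k. x (\<pi> i) * (h i - g (\<pi> i))) \<ge> 0" using claim[of k] by simp
  then show ?thesis unfolding LS_def h_def[symmetric]
    by (simp add: algebra_simps sum_subtractf)
qed

lemma greedy:
  assumes sm: "submodular_on k f" and nz: "f {} = 0" and p: "\<pi> permutes {1..k}"
    and srt: "\<And>i j. 1 \<le> i \<Longrightarrow> i \<le> j \<Longrightarrow> j \<le> k \<Longrightarrow> x (\<pi> j) \<le> x (\<pi> i)"
  shows "lovasz_ext k f x = LS k f \<pi> x"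
proof -
  obtain \<sigma> where s: "\<sigma> permutes {1..k}" "lovasz_ext k f x = LS k f \<sigma> x" using ext_attained by blast
  have "LS k f \<sigma> x = (\<Sum>j\<in>{1..k}. x j * gv f \<sigma> j)" by (rule LS_as_sum[OF s(1)])
  also have "\<dots> = (\<Sum>i\<in>{1..k}. x (\<pi> i) * gv f \<sigma> (\<pi> i))"
    using sum.reindex_bij_betw[OF permutes_imp_bij[OF p], of "\<lambda>j. x j * gv f \<sigma> j"] by simp
  also have "\<dots> \<le> LS k f \<pi> x"
    apply (rule greedy_core[where g="gv f \<sigma>" and \<pi>=\<pi> and k=k and f=f and x=x, OF p nz])
    using srt apply blast
    using gv_sub[OF sm nz s(1), of k] permutes_image[OF s(1)] gv_total[of \<sigma> k f, OF s(1) nz] by auto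
  finally show ?thesis using s(2) LS_le_ext[OF p, of f x] by simp
qed



lemma sort_exists:
  fixes x :: "nat \<Rightarrow> real"
  shows "\<exists>\<pi>. \<pi> permutes {1..k} \<and> (\<forall>i j. 1 \<le> i \<longrightarrow> i \<le> j \<longrightarrow> j \<le> k \<longrightarrow> x (\<pi> j) \<le> x (\<pi> i))"
proof -
  define xs where "xs = sort_key (\<lambda>j. - x j) [1..<Suc k]"
  have len: "length xs = k" and dist: "distinct xs" and st: "set xs = {1..k}"
    and srt: "sorted (map (\<lambda>j. - x j) xs)"
    by (auto simp: xs_def)
  define \<pi> where "\<pi> i = (if i \<in> {1..k} then xs ! (i - 1) else i)" for i
  have inj: "inj_on \<pi> {1..k}"
  proof (rule inj_onI)
    fix i j assume "i \<in> {1..k}" "j \<in> {1..k}" "\<pi> i = \<pi> j"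
    then have "xs ! (i - 1) = xs ! (j - 1)" by (simp add: \<pi>_def)
    then have "i - 1 = j - 1" using nth_eq_iff_index_eq[OF dist] len \<open>i \<in> {1..k}\<close> \<open>j \<in> {1..k}\<close> by force
    then show "i = j" using \<open>i \<in> {1..k}\<close> \<open>j \<in> {1..k}\<close> by auto
  qed
  have img: "\<pi> ` {1..k} = {1..k}"
  proof
    show "\<pi> ` {1..k} \<subseteq> {1..k}"
    proof
      fix z assume "z \<in> \<pi> ` {1..k}"
      then obtain i where i: "i \<in> {1..k}" "z = xs ! (i - 1)" by (auto simp: \<pi>_def)
      then have "z \<in> set xs" using len by auto
      then show "z \<in> {1..k}" using st by simp
    qed
  next
    show "{1..k} \<subseteq> \<pi> ` {1..k}"
    proof
      fix z assume "z \<in> {1..k}"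
      then have "z \<in> set xs" using st by simp
      then obtain m where m: "m < k" "z = xs ! m" using len by (auto simp: in_set_conv_nth)
      then have "\<pi> (Suc m) = z" "Suc m \<in> {1..k}" by (auto simp: \<pi>_def)
      then show "z \<in> \<pi> ` {1..k}" by force
    qed
  qed
  have bb: "bij_betw \<pi> {1..k} {1..k}" using inj img by (simp add: bij_betw_def)
  have perm: "\<pi> permutes {1..k}"
    by (rule bij_imp_permutes[OF bb]) (metis \<pi>_def)
  have "x (\<pi> j) \<le> x (\<pi> i)" if "1 \<le> i" "i \<le> j" "j \<le> k" for i j
  proof -
    have "(map (\<lambda>j. - x j) xs) ! (i - 1) \<le> (map (\<lambda>j. - x j) xs) ! (j - 1)"
      using sorted_nth_mono[OF srt, of "i - 1" "j - 1"] that len by simp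
    then show ?thesis using that len by (simp add: \<pi>_def)
  qed
  then show ?thesis using perm by blast
qed

lemma LS_mono:
  assumes inc: "increasing_on k f" and p: "\<sigma> permutes {1..k}"
    and le: "\<And>i. i \<in> {1..k} \<Longrightarrow> x i \<le> x' i"
  shows "LS k f \<sigma> x \<le> LS k f \<sigma> x'"
  unfolding LS_def
proof (rule sum_mono)
  fix i assume i: "i \<in> {1..k}"
  have si: "\<sigma> i \<in> {1..k}" using i permutes_in_image[OF p] by simp
  have sub: "\<sigma> ` {1..<i} \<subseteq> {1..k}" using i permutes_image[OF p] by auto
  have dis: "\<sigma> ` {1..<i} \<inter> {\<sigma> i} = {}"
    using permutes_inj[OF p] by (auto simp: inj_def) (metis less_irrefl)
  have "{1..i} = insert i {1..<i}" using i by auto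
  then have un: "\<sigma> ` {1..<i} \<union> {\<sigma> i} = \<sigma> ` {1..i}" by auto
  have "f (\<sigma> ` {1..i}) \<ge> f (\<sigma> ` {1..<i})"
    using inc sub si dis un unfolding increasing_on_def by (metis empty_subsetI insert_subset)
  then show "x (\<sigma> i) * (f (\<sigma> ` {1..i}) - f (\<sigma> ` {1..<i})) \<le> x' (\<sigma> i) * (f (\<sigma> ` {1..i}) - f (\<sigma> ` {1..<i}))"
    using le[OF si] by (intro mult_right_mono) auto
qed

lemma ext_mono:
  assumes inc: "increasing_on k f" and le: "\<And>i. i \<in> {1..k} \<Longrightarrow> x i \<le> x' i"
  shows "lovasz_ext k f x \<le> lovasz_ext k f x'"
proof -
  obtain \<sigma> where s: "\<sigma> permutes {1..k}" "lovasz_ext k f x = LS k f \<sigma> x" using ext_attained by blast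
  have "LS k f \<sigma> x \<le> LS k f \<sigma> x'" by (rule LS_mono[OF inc s(1)]) (rule le)
  then show ?thesis using s LS_le_ext[OF s(1), of f x'] by simp
qed

lemma ext_local:
  assumes eq: "\<And>i. i \<in> {1..k} \<Longrightarrow> x i = x' i"
  shows "lovasz_ext k f x = lovasz_ext k f x'"
proof -
  have "LS k f \<sigma> x = LS k f \<sigma> x'" if "\<sigma> permutes {1..k}" for \<sigma>
    unfolding LS_def using permutes_in_image[OF that] eq by (intro sum.cong) auto
  then show ?thesis unfolding ext_LS by (intro arg_cong[where f=Max] image_cong) auto
qed

lemma loss_local:
  assumes eq: "\<And>i. i \<in> {1..k} \<Longrightarrow> u i = u' i"
  shows "exp_loss k f p u = exp_loss k f p u'"
  unfolding exp_loss_def lovasz_hinge_def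
  by (intro sum.cong refl arg_cong2[where f="(*)"] ext_local) (simp add: eq)



lemma labels_pm: "y \<in> labels k \<Longrightarrow> i \<in> {1..k} \<Longrightarrow> y i = -1 \<or> y i = 1"
  unfolding labels_def by (auto simp: PiE_iff)

lemma comb_lemma:
  assumes sm: "submodular_on k f" and nz: "f {} = 0" and y: "\<forall>i\<in>{1..k}. y i = -1 \<or> y i = 1"
   and cube: "\<forall>i\<in>{1..k}. \<bar>c i\<bar> \<le> 1" "\<forall>i\<in>{1..k}. \<bar>c1 i\<bar> \<le> 1" "\<forall>i\<in>{1..k}. \<bar>c2 i\<bar> \<le> 1"
   and comb: "\<forall>i\<in>{1..k}. c i = l * c1 i + (1-l) * c2 i"
   and pres: "\<forall>a\<in>{1..k}. \<forall>b\<in>{1..k}. c a * y a \<le> c b * y b \<longrightarrow> c1 a * y a \<le> c1 b * y b \<and> c2 a * y a \<le> c2 b * y b"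
  shows "lovasz_hinge k f c y = l * lovasz_hinge k f c1 y + (1-l) * lovasz_hinge k f c2 y"
proof -
  define X where "X c' = (\<lambda>i. max 0 (1 - c' i * y i))" for c' :: "nat \<Rightarrow> real"
  have Xe: "X c' i = 1 - c' i * y i" if "i\<in>{1..k}" "\<bar>c' i\<bar> \<le> 1" for c' i
  proof -
    have "y i = -1 \<or> y i = 1" using y that by auto
    then show ?thesis using that unfolding X_def by (auto simp: abs_le_iff)
  qed
  obtain \<pi> where \<pi>: "\<pi> permutes {1..k}" "\<forall>i j. 1 \<le> i \<longrightarrow> i \<le> j \<longrightarrow> j \<le> k \<longrightarrow> X c (\<pi> j) \<le> X c (\<pi> i)"
    using sort_exists by blast
  have pin: "\<pi> i \<in> {1..k}" if "i \<in> {1..k}" for i using permutes_in_image[OF \<pi>(1)] that by simp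
  have s12: "X c1 (\<pi> j) \<le> X c1 (\<pi> i) \<and> X c2 (\<pi> j) \<le> X c2 (\<pi> i)" if "1 \<le> i" "i \<le> j" "j \<le> k" for i j
  proof -
    have a: "\<pi> i \<in> {1..k}" "\<pi> j \<in> {1..k}" using pin that by auto
    have "X c (\<pi> j) \<le> X c (\<pi> i)" using \<pi>(2) that by blast
    then have "c (\<pi> i) * y (\<pi> i) \<le> c (\<pi> j) * y (\<pi> j)"
      using Xe[where c'=c and i="\<pi> i", OF a(1) cube(1)[rule_format, OF a(1)]] Xe[where c'=c and i="\<pi> j", OF a(2) cube(1)[rule_format, OF a(2)]] by linarith
    then have "c1 (\<pi> i) * y (\<pi> i) \<le> c1 (\<pi> j) * y (\<pi> j) \<and> c2 (\<pi> i) * y (\<pi> i) \<le> c2 (\<pi> j) * y (\<pi> j)"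
      using pres a by blast
    then show ?thesis
      using Xe[where c'=c1 and i="\<pi> i", OF a(1) cube(2)[rule_format, OF a(1)]] Xe[where c'=c1 and i="\<pi> j", OF a(2) cube(2)[rule_format, OF a(2)]]
        Xe[where c'=c2 and i="\<pi> i", OF a(1) cube(3)[rule_format, OF a(1)]] Xe[where c'=c2 and i="\<pi> j", OF a(2) cube(3)[rule_format, OF a(2)]] by linarith
  qed
  have e0: "lovasz_ext k f (X c) = LS k f \<pi> (X c)"
    by (rule greedy[OF sm nz \<pi>(1)]) (use \<pi>(2) in blast)
  have e1: "lovasz_ext k f (X c1) = LS k f \<pi> (X c1)"
    by (rule greedy[OF sm nz \<pi>(1)]) (use s12 in blast)
  have e2: "lovasz_ext k f (X c2) = LS k f \<pi> (X c2)"
    by (rule greedy[OF sm nz \<pi>(1)]) (use s12 in blast)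
  have lin: "LS k f \<pi> (X c) = l * LS k f \<pi> (X c1) + (1-l) * LS k f \<pi> (X c2)"
    unfolding LS_def sum_distrib_left sum.distrib[symmetric]
  proof (rule sum.cong[OF refl])
    fix i assume i: "i \<in> {1..k}"
    have "X c (\<pi> i) = l * X c1 (\<pi> i) + (1 - l) * X c2 (\<pi> i)"
    proof -
      have q: "\<pi> i \<in> {1..k}" by (rule pin[OF i])
      have e1: "X c (\<pi> i) = 1 - c (\<pi> i) * y (\<pi> i)" using Xe[OF q] cube(1) q by blast
      have e2: "X c1 (\<pi> i) = 1 - c1 (\<pi> i) * y (\<pi> i)" using Xe[OF q] cube(2) q by blast
      have e3: "X c2 (\<pi> i) = 1 - c2 (\<pi> i) * y (\<pi> i)" using Xe[OF q] cube(3) q by blast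
      have e4: "c (\<pi> i) = l * c1 (\<pi> i) + (1-l) * c2 (\<pi> i)" using comb q by blast
      show ?thesis unfolding e1 e2 e3 e4 by (simp add: algebra_simps)
    qed
    then show "X c (\<pi> i) * (f (\<pi> ` {1..i}) - f (\<pi> ` {1..<i})) =
      l * (X c1 (\<pi> i) * (f (\<pi> ` {1..i}) - f (\<pi> ` {1..<i}))) +
      (1 - l) * (X c2 (\<pi> i) * (f (\<pi> ` {1..i}) - f (\<pi> ` {1..<i})))"
      by (simp only: \<open>X c (\<pi> i) = l * X c1 (\<pi> i) + (1 - l) * X c2 (\<pi> i)\<close>) (simp add: algebra_simps)
  qed
  show ?thesis unfolding lovasz_hinge_def using e0 e1 e2 lin unfolding X_def by simp
qed

definition phi :: "real \<Rightarrow> real \<Rightarrow> real \<Rightarrow> real" where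
  "phi \<tau> t s = (if \<bar>s\<bar> = \<tau> then sgn s * t else s)"

lemma phi_odd: "y = -1 \<or> y = 1 \<Longrightarrow> phi \<tau> t s * y = phi \<tau> t (s * y)"
  by (auto simp: phi_def sgn_minus)

lemma phi_mono:
  assumes "0 < \<tau>" "0 \<le> t" "\<not> (min t \<tau> < \<bar>s1\<bar> \<and> \<bar>s1\<bar> < max t \<tau>)"
    "\<not> (min t \<tau> < \<bar>s2\<bar> \<and> \<bar>s2\<bar> < max t \<tau>)" "s1 \<le> s2"
  shows "phi \<tau> t s1 \<le> phi \<tau> t s2"
proof -
  have sg: "sgn s = (if s < 0 then -1 else if s = 0 then 0 else 1)" for s :: real by (simp add: sgn_if)
  show ?thesis
  using assms unfolding phi_def
  apply (cases "s1 < 0"; cases "s2 < 0"; cases "s1 = 0"; cases "s2 = 0"; cases "t \<le> \<tau>")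
  apply (simp_all add: sg min_def max_def)
  apply linarith+
  done
qed

lemma abs_phi: "0 < \<tau> \<Longrightarrow> 0 \<le> t \<Longrightarrow> \<bar>phi \<tau> t s\<bar> = (if \<bar>s\<bar> = \<tau> then t else \<bar>s\<bar>)"
  unfolding phi_def by (auto simp: abs_mult abs_sgn_eq)

lemma clip_le:
  assumes inc: "increasing_on k f" and p: "p \<in> simplex_labels k"
  shows "exp_loss k f p (\<lambda>i. max (-1) (min 1 (u i))) \<le> exp_loss k f p u"
  unfolding exp_loss_def
proof (rule sum_mono)
  fix y assume y: "y \<in> labels k"
  have "lovasz_hinge k f (\<lambda>i. max (-1) (min 1 (u i))) y \<le> lovasz_hinge k f u y"
    unfolding lovasz_hinge_def
  proof (rule ext_mono[OF inc])
    fix i assume "i \<in> {1..k}"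
    then have "y i = -1 \<or> y i = 1" using labels_pm[OF y] by blast
    then show "max 0 (1 - max (- 1) (min 1 (u i)) * y i) \<le> max 0 (1 - u i * y i)"
      by (auto simp: max_def min_def)
  qed
  moreover have "p y \<ge> 0" using p y unfolding simplex_labels_def by auto
  ultimately show "p y * lovasz_hinge k f (\<lambda>i. max (-1) (min 1 (u i))) y \<le> p y * lovasz_hinge k f u y"
    by (intro mult_left_mono)
qed



lemma cube_case:
  assumes sm: "submodular_on k f" and nz: "f {} = 0"
    and p: "p \<in> simplex_labels k"
  shows "\<forall>c. (\<forall>i\<in>{1..k}. \<bar>c i\<bar> \<le> 1) \<longrightarrow> card ((\<lambda>i. \<bar>c i\<bar>) ` {1..k} - {0,1}) = n \<longrightarrow>
          (\<exists>v\<in>V_set k. exp_loss k f p v \<le> exp_loss k f p c)"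
proof (induction n rule: less_induct)
  case (less n)
  show ?case
  proof (intro allI impI)
    fix c :: "nat \<Rightarrow> real"
    assume cube: "\<forall>i\<in>{1..k}. \<bar>c i\<bar> \<le> 1" and cn: "card ((\<lambda>i. \<bar>c i\<bar>) ` {1..k} - {0,1}) = n"
    define Vals where "Vals = (\<lambda>i. \<bar>c i\<bar>) ` {1..k}"
    have finV: "finite Vals" unfolding Vals_def by simp
    have V01: "\<forall>v\<in>Vals. 0 \<le> v \<and> v \<le> 1" using cube unfolding Vals_def by auto
    show "\<exists>v\<in>V_set k. exp_loss k f p v \<le> exp_loss k f p c"
    proof (cases "Vals - {0,1} = {}")
      case True
      define v where "v = restrict c {1..k}"
      have "v \<in> V_set k"
      proof -
        have "c i \<in> {-1,0,1}" if "i \<in> {1..k}" for i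
        proof -
          have "\<bar>c i\<bar> \<in> Vals" using that Vals_def by auto
          then have "\<bar>c i\<bar> = 0 \<or> \<bar>c i\<bar> = 1" using True by auto
          then show ?thesis by (auto simp: abs_if split: if_splits)
        qed
        then show ?thesis unfolding V_set_def v_def by (auto simp: PiE_iff)
      qed
      moreover have "exp_loss k f p v = exp_loss k f p c" by (rule loss_local) (simp add: v_def)
      ultimately show ?thesis by (metis order_refl)
    next
      case False
      then obtain \<tau> where \<tau>: "\<tau> \<in> Vals" "\<tau> \<noteq> 0" "\<tau> \<noteq> 1" by auto
      have \<tau>01: "0 < \<tau>" "\<tau> < 1" using V01 \<tau> by force+
      define LoS where "LoS = insert 0 {v\<in>Vals. v < \<tau>}"
      define HiS where "HiS = insert 1 {v\<in>Vals. \<tau> < v}"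
      define lo where "lo = Max LoS"
      define hi where "hi = Min HiS"
      have finlo: "finite LoS" "LoS \<noteq> {}" using finV by (auto simp: LoS_def)
      have finhi: "finite HiS" "HiS \<noteq> {}" using finV by (auto simp: HiS_def)
      have lo_in: "lo \<in> insert 0 (insert 1 Vals)" using Max_in[OF finlo] unfolding lo_def LoS_def by auto
      have hi_in: "hi \<in> insert 0 (insert 1 Vals)" using Min_in[OF finhi] unfolding hi_def HiS_def by auto
      have lo0: "0 \<le> lo" using Max_ge[OF finlo(1), of 0] unfolding lo_def LoS_def by auto
      have lot: "lo < \<tau>" unfolding lo_def using Max_less_iff[OF finlo] \<tau>01 by (auto simp: LoS_def)
      have thi: "\<tau> < hi" unfolding hi_def using Min_gr_iff[OF finhi] \<tau>01 by (auto simp: HiS_def)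
      have hi1: "hi \<le> 1" using Min_le[OF finhi(1), of 1] unfolding hi_def HiS_def by auto
      have lo_max: "\<forall>v\<in>Vals. v < \<tau> \<longrightarrow> v \<le> lo" using Max_ge[OF finlo(1)] unfolding lo_def LoS_def by auto
      have hi_min: "\<forall>v\<in>Vals. \<tau> < v \<longrightarrow> hi \<le> v" using Min_le[OF finhi(1)] unfolding hi_def HiS_def by auto
      have red: "(\<forall>i\<in>{1..k}. \<bar>phi \<tau> t (c i)\<bar> \<le> 1) \<and>
                 card ((\<lambda>i. \<bar>phi \<tau> t (c i)\<bar>) ` {1..k} - {0,1}) < n \<and>
                 (\<forall>a\<in>{1..k}. \<forall>b\<in>{1..k}. \<forall>ya yb. (ya = -1 \<or> ya = 1) \<longrightarrow> (yb = -1 \<or> yb = 1) \<longrightarrow>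
                    c a * ya \<le> c b * yb \<longrightarrow> phi \<tau> t (c a) * ya \<le> phi \<tau> t (c b) * yb)"
        if t: "t \<in> insert 0 (insert 1 Vals)" "t \<noteq> \<tau>" "0 \<le> t" "t \<le> 1"
              "\<forall>v\<in>Vals. \<not> (min t \<tau> < v \<and> v < max t \<tau>)" for t
      proof (intro conjI)
        show "\<forall>i\<in>{1..k}. \<bar>phi \<tau> t (c i)\<bar> \<le> 1" using cube t abs_phi[OF \<tau>01(1) t(3)] by auto
        have sub: "(\<lambda>i. \<bar>phi \<tau> t (c i)\<bar>) ` {1..k} - {0,1} \<subseteq> Vals - {0,1} - {\<tau>}"
          using t abs_phi[OF \<tau>01(1) t(3)] unfolding Vals_def by auto
        have ps: "Vals - {0,1} - {\<tau>} \<subset> Vals - {0,1}" using \<tau> by auto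
        have "card ((\<lambda>i. \<bar>phi \<tau> t (c i)\<bar>) ` {1..k} - {0,1}) \<le> card (Vals - {0,1} - {\<tau>})"
          using sub finV by (intro card_mono) auto
        also have "\<dots> < card (Vals - {0,1})" using ps finV by (intro psubset_card_mono) auto
        finally show "card ((\<lambda>i. \<bar>phi \<tau> t (c i)\<bar>) ` {1..k} - {0,1}) < n"
          using cn unfolding Vals_def by simp
        show "\<forall>a\<in>{1..k}. \<forall>b\<in>{1..k}. \<forall>ya yb. (ya = -1 \<or> ya = 1) \<longrightarrow> (yb = -1 \<or> yb = 1) \<longrightarrow>
                    c a * ya \<le> c b * yb \<longrightarrow> phi \<tau> t (c a) * ya \<le> phi \<tau> t (c b) * yb"
        proof (intro ballI allI impI)
          fix a b ya yb
          assume a: "a \<in> {1..k}" and b: "b \<in> {1..k}" and ya: "ya = -1 \<or> ya = 1"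
            and yb: "yb = -1 \<or> yb = 1" and le: "c a * ya \<le> c b * yb"
          have "\<bar>c a * ya\<bar> \<in> Vals" "\<bar>c b * yb\<bar> \<in> Vals" using a b ya yb unfolding Vals_def by (auto simp: abs_mult)
          then have "phi \<tau> t (c a * ya) \<le> phi \<tau> t (c b * yb)"
            using t(5) by (intro phi_mono[OF \<tau>01(1) t(3) _ _ le]) auto
          then show "phi \<tau> t (c a) * ya \<le> phi \<tau> t (c b) * yb" using phi_odd[OF ya] phi_odd[OF yb] by simp
        qed
      qed
      have rlo: "t \<in> insert 0 (insert 1 Vals) \<and> t \<noteq> \<tau> \<and> 0 \<le> t \<and> t \<le> 1 \<and> (\<forall>v\<in>Vals. \<not> (min t \<tau> < v \<and> v < max t \<tau>))"
        if "t = lo" for t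
        using that lo_in lot lo0 \<tau>01 lo_max by force
      have rhi: "t \<in> insert 0 (insert 1 Vals) \<and> t \<noteq> \<tau> \<and> 0 \<le> t \<and> t \<le> 1 \<and> (\<forall>v\<in>Vals. \<not> (min t \<tau> < v \<and> v < max t \<tau>))"
        if "t = hi" for t
        using that hi_in thi hi1 \<tau>01 hi_min by force
      note Rlo = red[OF rlo[OF refl, THEN conjunct1] rlo[OF refl, THEN conjunct2, THEN conjunct1]
                   rlo[OF refl, THEN conjunct2, THEN conjunct2, THEN conjunct1]
                   rlo[OF refl, THEN conjunct2, THEN conjunct2, THEN conjunct2, THEN conjunct1]
                   rlo[OF refl, THEN conjunct2, THEN conjunct2, THEN conjunct2, THEN conjunct2]]
      note Rhi = red[OF rhi[OF refl, THEN conjunct1] rhi[OF refl, THEN conjunct2, THEN conjunct1]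
                   rhi[OF refl, THEN conjunct2, THEN conjunct2, THEN conjunct1]
                   rhi[OF refl, THEN conjunct2, THEN conjunct2, THEN conjunct2, THEN conjunct1]
                   rhi[OF refl, THEN conjunct2, THEN conjunct2, THEN conjunct2, THEN conjunct2]]
      define cl where "cl = (\<lambda>i. phi \<tau> lo (c i))"
      define ch where "ch = (\<lambda>i. phi \<tau> hi (c i))"
      define l where "l = (hi - \<tau>) / (hi - lo)"
      have l01: "0 \<le> l" "l \<le> 1" using lot thi unfolding l_def by (auto simp: field_simps)
      have lm: "l * (hi - lo) = hi - \<tau>" using lot thi unfolding l_def by simp
      have lmix: "l * lo + (1 - l) * hi = \<tau>" using lm by (simp add: algebra_simps)
      have comb: "\<forall>i\<in>{1..k}. c i = l * cl i + (1-l) * ch i"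
      proof
        fix i assume "i \<in> {1..k}"
        show "c i = l * cl i + (1-l) * ch i"
        proof (cases "\<bar>c i\<bar> = \<tau>")
          case True
          then have "c i = sgn (c i) * \<tau>" by (metis abs_mult_sgn mult.commute)
          moreover have "l * cl i + (1-l) * ch i = sgn (c i) * (l * lo + (1 - l) * hi)"
            using True unfolding cl_def ch_def phi_def by (simp add: algebra_simps)
          ultimately show ?thesis using lmix by simp
        next
          case False then show ?thesis unfolding cl_def ch_def phi_def by (simp add: algebra_simps)
        qed
      qed
      obtain v1 where v1: "v1 \<in> V_set k" "exp_loss k f p v1 \<le> exp_loss k f p cl"
        using less.IH[OF Rlo[THEN conjunct2, THEN conjunct1], THEN spec[where x=cl]] Rlo[THEN conjunct1]
        unfolding cl_def by auto
      obtain v2 where v2: "v2 \<in> V_set k" "exp_loss k f p v2 \<le> exp_loss k f p ch"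
        using less.IH[OF Rhi[THEN conjunct2, THEN conjunct1], THEN spec[where x=ch]] Rhi[THEN conjunct1]
        unfolding ch_def by auto
      have hy: "lovasz_hinge k f c y = l * lovasz_hinge k f cl y + (1-l) * lovasz_hinge k f ch y"
        if y: "y \<in> labels k" for y
      proof (rule comb_lemma[OF sm nz])
        show "\<forall>i\<in>{1..k}. y i = -1 \<or> y i = 1" using labels_pm[OF y] by blast
        show "\<forall>i\<in>{1..k}. \<bar>c i\<bar> \<le> 1" by (rule cube)
        show "\<forall>i\<in>{1..k}. \<bar>cl i\<bar> \<le> 1" using Rlo unfolding cl_def by blast
        show "\<forall>i\<in>{1..k}. \<bar>ch i\<bar> \<le> 1" using Rhi unfolding ch_def by blast
        show "\<forall>i\<in>{1..k}. c i = l * cl i + (1-l) * ch i" by (rule comb)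
        show "\<forall>a\<in>{1..k}. \<forall>b\<in>{1..k}. c a * y a \<le> c b * y b \<longrightarrow> cl a * y a \<le> cl b * y b \<and> ch a * y a \<le> ch b * y b"
          using Rlo[THEN conjunct2, THEN conjunct2] Rhi[THEN conjunct2, THEN conjunct2] labels_pm[OF y]
          unfolding cl_def ch_def by blast
      qed
      have Eeq: "exp_loss k f p c = l * exp_loss k f p cl + (1-l) * exp_loss k f p ch"
        unfolding exp_loss_def sum_distrib_left sum.distrib[symmetric]
        by (rule sum.cong[OF refl]) (simp add: hy algebra_simps)
      show ?thesis
      proof (cases "exp_loss k f p cl \<le> exp_loss k f p ch")
        case True
        have "(1-l) * (exp_loss k f p ch - exp_loss k f p cl) \<ge> 0" using True l01 by simp
        moreover have "l * exp_loss k f p cl + (1-l) * exp_loss k f p ch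
           = exp_loss k f p cl + (1-l) * (exp_loss k f p ch - exp_loss k f p cl)" by (simp add: algebra_simps)
        ultimately have "exp_loss k f p cl \<le> exp_loss k f p c" using Eeq by linarith
        then show ?thesis using v1 by (meson order.trans)
      next
        case False
        have "l * (exp_loss k f p cl - exp_loss k f p ch) \<ge> 0" using False l01 by simp
        moreover have "l * exp_loss k f p cl + (1-l) * exp_loss k f p ch
           = exp_loss k f p ch + l * (exp_loss k f p cl - exp_loss k f p ch)" by (simp add: algebra_simps)
        ultimately have "exp_loss k f p ch \<le> exp_loss k f p c" using Eeq by linarith
        then show ?thesis using v2 by (meson order.trans)
      qed
    qed
  qed
qed

theorem proposition1:
  fixes k :: nat and f :: "nat set \<Rightarrow> real"
  assumes "f \<in> F_class k"
  shows "\<forall>p\<in>simplex_labels k. \<exists>v\<in>V_set k.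
           (\<forall>u::nat \<Rightarrow> real. exp_loss k f p v \<le> exp_loss k f p u)"
proof
  fix p assume p: "p \<in> simplex_labels k"
  have sm: "submodular_on k f" and inc: "increasing_on k f" and nz: "f {} = 0"
    using assms unfolding F_class_def normalized_def by auto
  have finV: "finite (V_set k)" unfolding V_set_def by (intro finite_PiE) auto
  have neV: "(\<lambda>i\<in>{1..k}. 0) \<in> V_set k" unfolding V_set_def by auto
  define E where "E = exp_loss k f p"
  have "Min (E ` V_set k) \<in> E ` V_set k" using finV neV by (intro Min_in) auto
  then obtain v where v: "v \<in> V_set k" "E v = Min (E ` V_set k)" by auto
  have "E v \<le> E u" for u
  proof -
    define cu where "cu = (\<lambda>i. max (-1) (min 1 (u i)))"
    have cube: "\<forall>i\<in>{1..k}. \<bar>cu i\<bar> \<le> 1" unfolding cu_def by auto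
    obtain w where w: "w \<in> V_set k" "E w \<le> E cu"
      using cube_case[OF sm nz p] cube unfolding E_def by blast
    have "E v \<le> E w" using v w finV by simp
    also have "\<dots> \<le> E cu" by (rule w(2))
    also have "\<dots> \<le> E u" unfolding E_def cu_def by (rule clip_le[OF inc p])
    finally show ?thesis .
  qed
  then show "\<exists>v\<in>V_set k. \<forall>u. exp_loss k f p v \<le> exp_loss k f p u" using v unfolding E_def by blast
qed

end
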